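(* Let $\mathbb{O}$ be the real algebra of octonions with its standard basis $1,e_1,\dots,e_7$, where $e_\ell^2=-1$ for all $\ell$, $e_\ell e_m=-e_m e_\ell$ for $\ell\neq m$, and for $\ell\ne m$ the product $e_\ell e_m$ equals $\pm e_p$ for some $p$. Call an element homogeneous if it is a nonzero real multiple of a basis element. Then there is no $n\ge 1$ and no map $\sigma$ from the homogeneous elements of $\mathbb{O}$ to $\Gamma=\mathbb{Z}_2^n$ such that for all homogeneous $x,y$ one has $\sigma(xy)=\sigma(x)+\sigma(y)$ and $xy=(-1)^{\langle\sigma(x),\sigma(y)\rangle}yx$, where $\langle\cdot,\cdot\rangle$ denotes the standard scalar product on $\mathbb{Z}_2^n$. That is, $\mathbb{O}$ cannot be realized as a graded commutative algebra.
   Context: For an abelian group $\Gamma=\mathbb{Z}_2^n$, a $\Gamma$-graded commutative algebra is an algebra $A$ with a basis of homogeneous elements each assigned a degree $\sigma\in\Gamma$ such that $\sigma(xy)=\sigma(x)+\sigma(y)$ and $xy=(-1)^{\langle\sigma(x),\sigma(y)\rangle}yx$ for homogeneous $x,y$, where $\langle\cdot,\cdot\rangle$ is the standard scalar product of vectors in $\mathbb{Z}_2^n$. *)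

theory Defs
  imports "HOL-Analysis.Analysis" "HOL-Library.Z2"
begin

text \<open>Octonions: elements are real coordinate functions on the index set {0..7}
  (index 0 is the unit 1, indices 1..7 are e_1..e_7); coordinates outside {0..7} are 0.
  The multiplication table is the standard Fano-plane one with oriented triples
  (i, i+1, i+3) mod 7, i.e. (1,2,4),(2,3,5),(3,4,6),(4,5,7),(5,6,1),(6,7,2),(7,1,3):
  e_a e_b = e_c, e_b e_c = e_a, e_c e_a = e_b, and the reversed products are negative.\<close>

type_synonym octonion = "nat \<Rightarrow> real"

definition octonions :: "octonion set" where
  "octonions = {x. \<forall>k\<ge>8. x k = 0}"

text \<open>Third index (in 0..6) of the Fano line through distinct a, b (in 0..6),
  and the sign of the product e_(a+1) e_(b+1).\<close>
definition fano_third :: "nat \<Rightarrow> nat \<Rightarrow> nat" where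
  "fano_third a b =
    (let d = (b + 7 - a) mod 7 in
     if d = 1 then (a + 3) mod 7 else
     if d = 2 then (a + 6) mod 7 else
     if d = 4 then (a + 5) mod 7 else
     if d = 6 then (b + 3) mod 7 else
     if d = 5 then (b + 6) mod 7 else (b + 5) mod 7)"

definition fano_pos :: "nat \<Rightarrow> nat \<Rightarrow> bool" where
  "fano_pos a b = ((b + 7 - a) mod 7 \<in> {1, 2, 4})"

definition oct_basis_mult :: "nat \<Rightarrow> nat \<Rightarrow> real \<times> nat" where
  "oct_basis_mult i j =
    (if i = 0 then (1, j)
     else if j = 0 then (1, i)
     else if i = j then (-1, 0)
     else ((if fano_pos (i - 1) (j - 1) then 1 else -1), fano_third (i - 1) (j - 1) + 1))"

definition oct_e :: "nat \<Rightarrow> octonion" where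
  "oct_e i = (\<lambda>k. if k = i then 1 else 0)"

definition oct_mult :: "octonion \<Rightarrow> octonion \<Rightarrow> octonion" where
  "oct_mult x y = (\<lambda>k. \<Sum>i<8. \<Sum>j<8.
      if snd (oct_basis_mult i j) = k then fst (oct_basis_mult i j) * x i * y j else 0)"

definition oct_scale :: "real \<Rightarrow> octonion \<Rightarrow> octonion" where
  "oct_scale c x = (\<lambda>k. c * x k)"

definition oct_homogeneous :: "octonion \<Rightarrow> bool" where
  "oct_homogeneous x \<longleftrightarrow> (\<exists>c i. c \<noteq> 0 \<and> i < 8 \<and> x = oct_scale c (oct_e i))"

definition z2_inner :: "bit ^ 'n \<Rightarrow> bit ^ 'n \<Rightarrow> bit" where
  "z2_inner a b = (\<Sum>i\<in>UNIV. a $ i * b $ i)"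

definition sign_of_bit :: "bit \<Rightarrow> real" where
  "sign_of_bit b = (if b = 0 then 1 else -1)"

end

theory Submission
  imports Defs
begin

lemma sum_if_const: "(\<Sum>j\<in>A. if P then f j else 0) = (if P then sum f A else (0::real))"
  by simp

lemma mult_e:
  assumes "i < 8" "j < 8"
  shows "oct_mult (oct_e i) (oct_e j) = oct_scale (fst (oct_basis_mult i j)) (oct_e (snd (oct_basis_mult i j)))"
proof
  fix k
  have "oct_mult (oct_e i) (oct_e j) k = (\<Sum>i'<8. if i' = i then (\<Sum>j'<8.
      if j' = j then (if snd (oct_basis_mult i' j') = k then fst (oct_basis_mult i' j') else 0) else 0) else 0)"
    unfolding oct_mult_def oct_e_def by (intro sum.cong refl) (simp only: sum_if_const[symmetric], intro sum.cong refl, auto)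
  also have "\<dots> = (if snd (oct_basis_mult i j) = k then fst (oct_basis_mult i j) else 0)"
    using assms by (simp only: sum.delta finite_lessThan lessThan_iff assms if_True)
  finally show "oct_mult (oct_e i) (oct_e j) k = oct_scale (fst (oct_basis_mult i j)) (oct_e (snd (oct_basis_mult i j))) k"
    by (simp add: oct_scale_def oct_e_def)
qed

lemma hom_e: "i < 8 \<Longrightarrow> oct_homogeneous (oct_e i)"
  unfolding oct_homogeneous_def
  by (rule exI[of _ 1], rule exI[of _ i]) (auto simp: oct_scale_def)

lemma inner_add: "z2_inner a (b + c) = z2_inner a b + z2_inner a c"
  unfolding z2_inner_def by (simp only: vector_add_component distrib_left sum.distrib)

lemma e12: "oct_mult (oct_e 1) (oct_e 2) = oct_e 4"
  by (simp add: mult_e oct_basis_mult_def fano_pos_def fano_third_def oct_scale_def)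
lemma e21: "oct_mult (oct_e 2) (oct_e 1) = oct_scale (-1) (oct_e 4)"
  by (simp add: mult_e oct_basis_mult_def fano_pos_def fano_third_def oct_scale_def)
lemma e34: "oct_mult (oct_e 3) (oct_e 4) = oct_e 6"
  by (simp add: mult_e oct_basis_mult_def fano_pos_def fano_third_def oct_scale_def)
lemma e13: "oct_mult (oct_e 1) (oct_e 3) = oct_e 7"
  by (simp add: mult_e oct_basis_mult_def fano_pos_def fano_third_def oct_scale_def)
lemma e31: "oct_mult (oct_e 3) (oct_e 1) = oct_scale (-1) (oct_e 7)"
  by (simp add: mult_e oct_basis_mult_def fano_pos_def fano_third_def oct_scale_def)
lemma e16: "oct_mult (oct_e 1) (oct_e 6) = oct_scale (-1) (oct_e 5)"
  by (simp add: mult_e oct_basis_mult_def fano_pos_def fano_third_def oct_scale_def)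
lemma e61: "oct_mult (oct_e 6) (oct_e 1) = oct_e 5"
  by (simp add: mult_e oct_basis_mult_def fano_pos_def fano_third_def oct_scale_def)
lemma e11: "oct_mult (oct_e 1) (oct_e 1) = oct_scale (-1) (oct_e 0)"
  by (simp add: mult_e oct_basis_mult_def fano_pos_def fano_third_def oct_scale_def)

lemma anti: "oct_e k = oct_scale (sign_of_bit b) (oct_scale (-1) (oct_e k)) \<Longrightarrow> b = 1"
proof -
  assume h: "oct_e k = oct_scale (sign_of_bit b) (oct_scale (-1) (oct_e k))"
  show "b = 1"
  proof (rule ccontr)
    assume "b \<noteq> 1" then have "b = 0" by (cases b) auto
    with fun_cong[OF h, of k] show False by (simp add: oct_e_def oct_scale_def sign_of_bit_def)
  qed
qed

lemma anti2: "oct_scale (-1) (oct_e k) = oct_scale (sign_of_bit b) (oct_e k) \<Longrightarrow> b = 1"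
proof -
  assume h: "oct_scale (-1) (oct_e k) = oct_scale (sign_of_bit b) (oct_e k)"
  show "b = 1"
  proof (rule ccontr)
    assume "b \<noteq> 1" then have "b = 0" by (cases b) auto
    with fun_cong[OF h, of k] show False by (simp add: oct_e_def oct_scale_def sign_of_bit_def)
  qed
qed

lemma comm: "oct_scale (-1) (oct_e k) = oct_scale (sign_of_bit b) (oct_scale (-1) (oct_e k)) \<Longrightarrow> b = 0"
proof -
  assume h: "oct_scale (-1) (oct_e k) = oct_scale (sign_of_bit b) (oct_scale (-1) (oct_e k))"
  show "b = 0"
  proof (rule ccontr)
    assume "b \<noteq> 0" then have "b = 1" by (cases b) auto
    with fun_cong[OF h, of k] show False by (simp add: oct_e_def oct_scale_def sign_of_bit_def)
  qed
qed

theorem mainTheorem2: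
  fixes \<sigma> :: "octonion \<Rightarrow> bit ^ 'n"
  shows "\<not> (\<forall>x y. oct_homogeneous x \<longrightarrow> oct_homogeneous y \<longrightarrow>
            \<sigma> (oct_mult x y) = \<sigma> x + \<sigma> y \<and>
            oct_mult x y = oct_scale (sign_of_bit (z2_inner (\<sigma> x) (\<sigma> y))) (oct_mult y x))"
proof
  assume H: "\<forall>x y. oct_homogeneous x \<longrightarrow> oct_homogeneous y \<longrightarrow>
            \<sigma> (oct_mult x y) = \<sigma> x + \<sigma> y \<and>
            oct_mult x y = oct_scale (sign_of_bit (z2_inner (\<sigma> x) (\<sigma> y))) (oct_mult y x)"
  have h: "\<And>i j. i < 8 \<Longrightarrow> j < 8 \<Longrightarrow> \<sigma> (oct_mult (oct_e i) (oct_e j)) = \<sigma> (oct_e i) + \<sigma> (oct_e j) \<and>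
      oct_mult (oct_e i) (oct_e j) = oct_scale (sign_of_bit (z2_inner (\<sigma> (oct_e i)) (\<sigma> (oct_e j)))) (oct_mult (oct_e j) (oct_e i))"
    using H hom_e by blast
  have s4: "\<sigma> (oct_e 4) = \<sigma> (oct_e 1) + \<sigma> (oct_e 2)" using conjunct1[OF h[of 1 2]] unfolding e12 by simp
  have s6: "\<sigma> (oct_e 6) = \<sigma> (oct_e 3) + \<sigma> (oct_e 4)" using conjunct1[OF h[of 3 4]] unfolding e34 by simp
  have i11: "z2_inner (\<sigma> (oct_e 1)) (\<sigma> (oct_e 1)) = 0" using conjunct2[OF h[of 1 1]] unfolding e11 by (intro comm) simp
  have i12: "z2_inner (\<sigma> (oct_e 1)) (\<sigma> (oct_e 2)) = 1" using conjunct2[OF h[of 1 2]] unfolding e12 e21 by (intro anti) simp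
  have i13: "z2_inner (\<sigma> (oct_e 1)) (\<sigma> (oct_e 3)) = 1" using conjunct2[OF h[of 1 3]] unfolding e13 e31 by (intro anti) simp
  have i16: "z2_inner (\<sigma> (oct_e 1)) (\<sigma> (oct_e 6)) = 1" using conjunct2[OF h[of 1 6]] unfolding e16 e61 by (intro anti2) simp
  have "z2_inner (\<sigma> (oct_e 1)) (\<sigma> (oct_e 6)) = 0"
    unfolding s6 s4 inner_add i11 i12 i13 by simp
  with i16 show False by simp
qed

end
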